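(* Let $\sigma$ be an erasing $k$-block substitution with $w_\epsilon\ne1^k$ that satisfies the optimality condition. Then there exists a Lebesgue-measurable set $\Gamma\subset\mathbb I$ (in fact of Lebesgue measure $0$) such that $f_\sigma(\Gamma)$ is not Lebesgue measurable.
   Context: Notation: $\mathbb I=[0,1]$. $\{0,1\}^*$ and $\{0,1\}^\omega$ denote finite and infinite binary words, and $\epsilon$ is the empty word. For a word $w$, set $0.w=\sum_iw_i2^{-i}$. For $x\in(0,1]$, $\widetilde x$ is the unique infinite binary expansion of $x$ not ending in $0^\infty$. Fix $k\ge2$. An erasing $k$-block substitution is a map $\sigma:\{0,1\}^k\to\{0,1\}^*$ with exactly one block $w_\epsilon$ such that $\sigma(w_\epsilon)=\epsilon$. It acts blockwise on infinite words, concatenating the images of consecutive $k$-blocks. The map $f_\sigma:\mathbb I\to\mathbb I$ is defined by $f_\sigma(x)=0.\sigma(\widetilde x)$ if $x\in(0,1]$ and $\widetilde x\neq w_\epsilon^\infty$, and $f_\sigma(x)=0$ otherwise. Optimality condition: every $w\in\{0,1\}^\omega$ can be written as $w=\prod_{i\ge1}\sigma(b_i)$ with blocks $b_i\in\{0,1\}^k$ satisfying $\sigma(b_i)\ne\epsilon$. *)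

theory Defs
  imports "HOL-Analysis.Analysis"
begin

text \<open>Binary letters are booleans (True = 1, False = 0). Finite words are lists,
infinite words are functions nat \<Rightarrow> bool (letter w_1 is w 0).\<close>

definition binval :: "(nat \<Rightarrow> bool) \<Rightarrow> real" where
  "binval w = (\<Sum>i. (if w i then 1 else 0) / 2 ^ (Suc i))"

definition finval :: "bool list \<Rightarrow> real" where
  "finval u = (\<Sum>i<length u. (if u ! i then 1 else 0) / 2 ^ (Suc i))"

definition tilde :: "real \<Rightarrow> (nat \<Rightarrow> bool)" where
  "tilde x = (THE w. binval w = x \<and> (\<exists>\<^sub>\<infinity>i. w i))"

definition block :: "nat \<Rightarrow> (nat \<Rightarrow> bool) \<Rightarrow> nat \<Rightarrow> bool list" where
  "block k w j = map (\<lambda>i. w (j * k + i)) [0..<k]"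

definition startpos :: "(nat \<Rightarrow> bool list) \<Rightarrow> nat \<Rightarrow> nat" where
  "startpos u j = (\<Sum>i<j. length (u i))"

text \<open>Infinite concatenation of a sequence of nonempty finite words.\<close>
definition concat_inf :: "(nat \<Rightarrow> bool list) \<Rightarrow> nat \<Rightarrow> bool" where
  "concat_inf u n = (let j = (LEAST j. n < startpos u (Suc j)) in u j ! (n - startpos u j))"

text \<open>The value 0.(u_0 u_1 u_2 ...) of the (finite or infinite) concatenation of the
finite words u_j.\<close>
definition concat_val :: "(nat \<Rightarrow> bool list) \<Rightarrow> real" where
  "concat_val u = (\<Sum>j. finval (u j) / 2 ^ startpos u j)"

definition erasing_block_subst :: "nat \<Rightarrow> (bool list \<Rightarrow> bool list) \<Rightarrow> bool list \<Rightarrow> bool" where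
  "erasing_block_subst k \<sigma> we \<longleftrightarrow> length we = k \<and> \<sigma> we = [] \<and>
     (\<forall>b. length b = k \<and> \<sigma> b = [] \<longrightarrow> b = we)"

definition optimal :: "nat \<Rightarrow> (bool list \<Rightarrow> bool list) \<Rightarrow> bool" where
  "optimal k \<sigma> \<longleftrightarrow> (\<forall>w :: nat \<Rightarrow> bool. \<exists>b :: nat \<Rightarrow> bool list.
     (\<forall>i. length (b i) = k \<and> \<sigma> (b i) \<noteq> []) \<and> w = concat_inf (\<lambda>i. \<sigma> (b i)))"

definition periodic_word :: "bool list \<Rightarrow> nat \<Rightarrow> bool" where
  "periodic_word u i = u ! (i mod length u)"

definition f_sigma :: "nat \<Rightarrow> (bool list \<Rightarrow> bool list) \<Rightarrow> bool list \<Rightarrow> real \<Rightarrow> real" where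
  "f_sigma k \<sigma> we x =
     (if 0 < x \<and> x \<le> 1 \<and> tilde x \<noteq> periodic_word we
      then concat_val (\<lambda>j. \<sigma> (block k (tilde x) j)) else 0)"

end

theory Submission
  imports Defs
begin


lemma vitali: "\<exists>A. A \<subseteq> {0<..<1::real} \<and> A \<notin> sets lebesgue"
proof -
  define r where "r x = (SOME y::real. y \<in> {0<..<1} \<and> x - y \<in> \<rat>)" for x :: real
  have r1: "r x \<in> {0<..<1} \<and> x - r x \<in> \<rat>" for x
  proof -
    obtain q where q: "q \<in> \<rat>" "x - 1 < q" "q < x" using Rats_dense_in_real[of "x-1" x] by auto
    have "\<exists>y::real. y \<in> {0<..<1} \<and> x - y \<in> \<rat>"
      by (rule exI[of _ "x - q"]) (use q in auto)
    then show ?thesis unfolding r_def by (rule someI_ex)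
  qed
  have r2: "r x = r y" if "x - y \<in> \<rat>" for x y
  proof -
    have "(\<lambda>z. z \<in> {0<..<1::real} \<and> x - z \<in> \<rat>) = (\<lambda>z. z \<in> {0<..<1} \<and> y - z \<in> \<rat>)"
    proof (rule ext)
      fix z
      have "x - z = (x - y) + (y - z)" "y - z = (x - z) - (x - y)" by auto
      then show "(z \<in> {0<..<1::real} \<and> x - z \<in> \<rat>) = (z \<in> {0<..<1} \<and> y - z \<in> \<rat>)"
        using that by (metis Rats_add Rats_diff)
    qed
    then show ?thesis unfolding r_def by simp
  qed
  define V where "V = r ` {0<..<1}"
  have Vsub: "V \<subseteq> {0<..<1}" using r1 by (auto simp: V_def)
  have disj: "v1 = v2 \<and> q1 = q2" if vv: "v1 \<in> V" "v2 \<in> V" "q1 \<in> \<rat>" "q2 \<in> \<rat>" "q1 + v1 = q2 + v2" for v1 v2 q1 q2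
  proof -
    obtain x1 x2 where x: "v1 = r x1" "v2 = r x2" using vv(1,2) unfolding V_def by blast
    have "x1 - x2 = (x1 - r x1) + (q2 - q1) - (x2 - r x2)" using x that by simp
    then have "x1 - x2 \<in> \<rat>" using r1 that by (metis Rats_add Rats_diff)
    then have "v1 = v2" using r2 x by simp
    then show ?thesis using that by simp
  qed
  have "V \<notin> sets lebesgue"
  proof
    assume Vm: "V \<in> sets lebesgue"
    have Vf: "V \<in> lmeasurable"
      by (rule bounded_set_imp_lmeasurable[OF _ Vm]) (rule bounded_subset[OF bounded_closed_interval[of 0 1]], use Vsub in auto)
    show False
    proof (cases "measure lebesgue V = 0")
      case True
      have nullT: "(+) q ` V \<in> null_sets lebesgue" for q :: real
      proof -
        have "(+) q ` V \<in> lmeasurable" using measurable_translation Vf by blast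
        moreover have "measure lebesgue ((+) q ` V) = 0" using True measure_translation by metis
        ultimately have "emeasure lebesgue ((+) q ` V) = 0" using emeasure_eq_measure2[of "(+) q ` V" lebesgue] by (simp del: emeasure_completion)
        then show ?thesis using \<open>(+) q ` V \<in> lmeasurable\<close> by (intro null_setsI) auto
      qed
      have "(\<Union>q\<in>\<rat>. (+) q ` V) \<in> null_sets lebesgue"
        by (rule null_sets_UN'[OF countable_rat nullT])
      moreover have "{0<..<1::real} \<subseteq> (\<Union>q\<in>\<rat>. (+) q ` V)"
      proof
        fix x :: real assume x: "x \<in> {0<..<1}"
        have "r x \<in> V" using x V_def by auto
        moreover have "x = (x - r x) + r x" by simp
        ultimately show "x \<in> (\<Union>q\<in>\<rat>. (+) q ` V)" using r1[of x] by blast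
      qed
      ultimately have "{0<..<1::real} \<in> null_sets lebesgue"
        using null_sets_completion_subset by blast
      then show False by (simp add: null_sets_def)
    next
      case False
      then have mpos: "measure lebesgue V > 0" using measure_nonneg by (metis less_eq_real_def)
      obtain N :: nat where N: "real N * measure lebesgue V > 2"
        using mpos reals_Archimedean3 by blast
      define F where "F n = (+) (1 / (real n + 2)) ` V" for n
      have Ff: "F n \<in> lmeasurable" for n unfolding F_def using measurable_translation Vf by blast
      have Fm: "measure lebesgue (F n) = measure lebesgue V" for n unfolding F_def by (rule measure_translation)
      have pw: "pairwise (\<lambda>i j. disjnt (F i) (F j)) {..<N}"
        unfolding pairwise_def disjnt_def
      proof (intro ballI impI)
        fix i j assume ij: "i \<in> {..<N}" "j \<in> {..<N}" "i \<noteq> j"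
        show "F i \<inter> F j = {}"
        proof (rule ccontr)
          assume "F i \<inter> F j \<noteq> {}"
          then obtain v1 v2 where v: "v1 \<in> V" "v2 \<in> V" "1 / (real i + 2) + v1 = 1 / (real j + 2) + v2"
            unfolding F_def by auto
          have "1 / (real i + 2) = 1 / (real j + 2)"
            using disj[OF v(1,2) _ _ v(3)] by simp
          then show False using ij by (simp add: field_simps)
        qed
      qed
      have "measure lebesgue (\<Union>i\<in>{..<N}. F i) = (\<Sum>i\<in>{..<N}. measure lebesgue (F i))"
        by (rule measure_UNION'[OF _ Ff pw]) auto
      also have "\<dots> = real N * measure lebesgue V" using Fm by simp
      finally have eq: "measure lebesgue (\<Union>i\<in>{..<N}. F i) = real N * measure lebesgue V" .
      have sub: "(\<Union>i\<in>{..<N}. F i) \<subseteq> {0..2}"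
      proof
        fix x assume "x \<in> (\<Union>i\<in>{..<N}. F i)"
        then obtain i v where iv: "v \<in> V" "x = 1 / (real i + 2) + v" unfolding F_def by auto
        have "1 / (real i + 2) \<le> 1" "0 \<le> 1 / (real i + 2)" by (auto simp: field_simps)
        moreover have "0 < v" "v < 1" using Vsub iv(1) by auto
        ultimately show "x \<in> {0..2}" using iv(2) by (simp only: atLeastAtMost_iff) linarith
      qed
      have "measure lebesgue (\<Union>i\<in>{..<N}. F i) \<le> measure lebesgue {0..2::real}"
        by (rule measure_mono_fmeasurable[OF sub]) (use Ff in \<open>auto intro!: sets.finite_UN\<close>)
      then show False using eq N by simp
    qed
  qed
  then show ?thesis using Vsub by blast
qed



definition dig :: "(nat \<Rightarrow> bool) \<Rightarrow> nat \<Rightarrow> real" where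
  "dig w i = (if w i then 1 else 0) / 2 ^ Suc i"

lemma dig_nonneg: "0 \<le> dig w i" by (simp add: dig_def)
lemma dig_le: "dig w i \<le> 1 / 2 ^ Suc i" unfolding dig_def by (cases "w i") (simp_all del: power_Suc)

lemma sums_geo2: "(\<lambda>i. 1 / 2 ^ Suc i :: real) sums 1"
proof -
  have "(\<lambda>i. (1/2) * (1/2::real) ^ i) sums ((1/2) * (1 / (1 - 1/2)))"
    by (rule sums_mult) (rule geometric_sums, simp)
  then show ?thesis by (simp add: power_divide)
qed

lemma summable_geo2: "summable (\<lambda>i. 1 / 2 ^ Suc i :: real)"
  using sums_geo2 sums_summable by blast

lemma summable_dig: "summable (dig w)"
  by (rule summable_comparison_test'[OF summable_geo2]) (simp add: dig_nonneg dig_le del: power_Suc)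

lemma binval_dig: "binval w = suminf (dig w)"
  unfolding binval_def dig_def ..

lemma binval_nonneg: "0 \<le> binval w"
  by (simp add: binval_dig dig_nonneg suminf_nonneg summable_dig)

lemma binval_le1: "binval w \<le> 1"
proof -
  have "suminf (dig w) \<le> (\<Sum>i. 1 / 2 ^ Suc i :: real)"
    by (rule suminf_le) (auto simp: dig_le summable_dig summable_geo2 simp del: power_Suc)
  then show ?thesis using sums_geo2 sums_unique by (metis binval_dig)
qed

lemma binval_pos: fixes w :: "nat \<Rightarrow> bool" assumes "w i" shows "0 < binval w"
proof -
  have "0 < dig w i" using assms by (simp add: dig_def)
  show ?thesis unfolding binval_dig
    by (rule suminf_pos2[OF summable_dig dig_nonneg \<open>0 < dig w i\<close>])
qed

lemma dig_shift: "dig (\<lambda>i. w (i + n)) i = dig w (i + n) * 2 ^ n"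
  by (simp add: dig_def power_add)

lemma binval_split: "binval w = (\<Sum>i<n. dig w i) + binval (\<lambda>i. w (i + n)) / 2 ^ n"
proof -
  have "binval (\<lambda>i. w (i + n)) = (\<Sum>i. dig w (i + n)) * 2 ^ n"
    unfolding binval_dig dig_shift
    by (rule suminf_mult2[symmetric]) (rule summable_ignore_initial_segment[OF summable_dig])
  then show ?thesis
    using suminf_split_initial_segment[OF summable_dig, of w n] by (simp add: binval_dig)
qed

lemma psum_int: "\<exists>z::int. (\<Sum>i<n. dig w i) * 2 ^ n = of_int z"
proof (induction n)
  case 0 then show ?case by simp
next
  case (Suc n)
  then obtain z where z: "(\<Sum>i<n. dig w i) * 2 ^ n = of_int z" by blast
  have "(\<Sum>i<Suc n. dig w i) * 2 ^ Suc n = 2 * ((\<Sum>i<n. dig w i) * 2 ^ n) + (if w n then 1 else 0)"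
    by (simp add: dig_def algebra_simps)
  then show ?case using z by (intro exI[of _ "2 * z + (if w n then 1 else 0)"]) simp
qed

lemma psum_char:
  assumes "binval w = y" "\<exists>\<^sub>\<infinity>i. w i"
  shows "(\<Sum>i<n. dig w i) * 2 ^ n = of_int (\<lceil>2 ^ n * y\<rceil> - 1)"
proof -
  obtain j where j: "j > n" "w j" using assms(2) INFM_nat by blast
  define t where "t = binval (\<lambda>i. w (i + n))"
  have "w ((j - n) + n)" using j by simp
  then have tpos: "0 < t" unfolding t_def by (rule binval_pos)
  have tle: "t \<le> 1" unfolding t_def by (rule binval_le1)
  obtain z where z: "(\<Sum>i<n. dig w i) * 2 ^ n = of_int z" using psum_int by blast
  have "2 ^ n * y = (\<Sum>i<n. dig w i) * 2 ^ n + t"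
    using binval_split[of w n] assms(1) by (simp add: t_def field_simps)
  then have "2 ^ n * y = of_int z + t" using z by simp
  then have "\<lceil>2 ^ n * y\<rceil> = z + 1"
    using tpos tle by (intro ceiling_unique) auto
  then show ?thesis using z by simp
qed

lemma binval_unique:
  assumes "binval w = y" "\<exists>\<^sub>\<infinity>i. w i" "binval v = y" "\<exists>\<^sub>\<infinity>i. v i"
  shows "w = v"
proof
  fix n
  have S: "(\<Sum>i<m. dig w i) = (\<Sum>i<m. dig v i)" for m
  proof -
    have "(\<Sum>i<m. dig w i) * 2 ^ m = (\<Sum>i<m. dig v i) * 2 ^ m"
      using psum_char[OF assms(1,2), of m] psum_char[OF assms(3,4), of m] by simp
    then show ?thesis by simp
  qed
  have "(\<Sum>i<Suc n. dig w i) - (\<Sum>i<n. dig w i) = (\<Sum>i<Suc n. dig v i) - (\<Sum>i<n. dig v i)"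
    using S[of n] S[of "Suc n"] by simp
  then have "dig w n = dig v n" by simp
  then show "w n = v n" by (simp add: dig_def split: if_splits)
qed

lemma binval_exists:
  assumes "0 < y" "y \<le> 1"
  shows "\<exists>w. binval w = y \<and> (\<exists>\<^sub>\<infinity>i. w i)"
proof -
  define a where "a n = \<lceil>2 ^ n * y\<rceil> - 1" for n :: nat
  have a1: "of_int (a n) < 2 ^ n * y" "2 ^ n * y \<le> of_int (a n) + 1" for n
    unfolding a_def by linarith+
  have a0: "a 0 = 0" unfolding a_def using assms by (simp add: ceiling_eq_iff)
  have aS: "a (Suc n) = 2 * a n \<or> a (Suc n) = 2 * a n + 1" for n
  proof -
    have "of_int (2 * a n) < 2 ^ Suc n * y" "2 ^ Suc n * y \<le> of_int (2 * a n) + 2"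
      using a1[of n] by auto
    moreover have "of_int (a (Suc n)) < 2 ^ Suc n * y" "2 ^ Suc n * y \<le> of_int (a (Suc n)) + 1"
      using a1[of "Suc n"] by auto
    ultimately have "2 * a n \<le> a (Suc n)" "a (Suc n) \<le> 2 * a n + 1"
      by linarith+
    then show ?thesis by linarith
  qed
  define w where "w n = (a (Suc n) = 2 * a n + 1)" for n
  have P: "(\<Sum>i<n. dig w i) = of_int (a n) / 2 ^ n" for n
  proof (induction n)
    case 0 then show ?case by (simp add: a0)
  next
    case (Suc n)
    have "(\<Sum>i<Suc n. dig w i) = of_int (a n) / 2 ^ n + dig w n" using Suc by simp
    also have "\<dots> = of_int (a (Suc n)) / 2 ^ Suc n"
      using aS[of n] by (auto simp: dig_def w_def field_simps)
    finally show ?case .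
  qed
  have lim: "(\<lambda>n. of_int (a n) / 2 ^ n) \<longlonglongrightarrow> y"
  proof -
    have "(\<lambda>n. 1 / 2 ^ n :: real) \<longlonglongrightarrow> 0"
      using LIMSEQ_inverse_realpow_zero[of 2] by (simp add: divide_inverse)
    then have l2: "(\<lambda>n. y - 1 / 2 ^ n :: real) \<longlonglongrightarrow> y - 0"
      by (intro tendsto_diff tendsto_const)
    show ?thesis
    proof (rule real_tendsto_sandwich[of "\<lambda>n. y - 1 / 2 ^ n" _ _ "\<lambda>n. y"])
      have "y - 1 / 2 ^ n \<le> of_int (a n) / 2 ^ n" for n
      proof -
        have "y \<le> (of_int (a n) + 1) / 2^n" using a1(2)[of n] by (simp add: pos_le_divide_eq mult.commute)
        then show ?thesis by (simp add: add_divide_distrib)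
      qed
      then show "\<forall>\<^sub>F n in sequentially. y - 1 / 2 ^ n \<le> of_int (a n) / 2 ^ n"
        by (auto intro!: always_eventually)
      show "\<forall>\<^sub>F n in sequentially. of_int (a n) / 2 ^ n \<le> y"
        using a1 by (auto simp: field_simps less_imp_le intro!: always_eventually)
    qed (use l2 in auto)
  qed
  then have sums: "dig w sums y" unfolding sums_def P .
  then have bv: "binval w = y" by (simp add: binval_dig sums_unique[symmetric])
  have "\<exists>\<^sub>\<infinity>i. w i"
  proof (rule ccontr)
    assume "\<not> (\<exists>\<^sub>\<infinity>i. w i)"
    then obtain m where "\<forall>n>m. \<not> w n" unfolding INFM_nat by blast
    then obtain N where N: "\<forall>i\<ge>N. \<not> w i" by (intro that[of "Suc m"]) auto
    have E: "(\<Sum>i<n. dig w i) = (\<Sum>i<N. dig w i)" if "n \<ge> N" for n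
      using that
    proof (induction n rule: dec_induct)
      case (step m) then show ?case using N by (simp add: dig_def)
    qed simp
    have "eventually (\<lambda>n. of_int (a n) / 2 ^ n = (of_int (a N) / 2 ^ N :: real)) sequentially"
      unfolding eventually_sequentially
    proof (intro exI allI impI)
      fix n assume "N \<le> n"
      then show "of_int (a n) / 2 ^ n = (of_int (a N) / 2 ^ N :: real)" using E[of n] P[of n] P[of N] by simp
    qed
    then have "(\<lambda>n. of_int (a n) / 2 ^ n) \<longlonglongrightarrow> (of_int (a N) / 2 ^ N :: real)"
      by (rule tendsto_eventually)
    then have "y = (of_int (a N) / 2 ^ N :: real)" using LIMSEQ_unique[OF lim] by blast
    then have "(of_int (a N) :: real) < 2^N * (of_int (a N) / 2 ^ N)" using a1(1)[of N] by simp
    then show False by simp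
  qed
  then show ?thesis using bv by blast
qed

lemma tilde_eq:
  assumes "binval w = x" "\<exists>\<^sub>\<infinity>i. w i"
  shows "tilde x = w"
  unfolding tilde_def
proof (rule the_equality)
  show "binval w = x \<and> (\<exists>\<^sub>\<infinity>i. w i)" using assms by simp
  fix v assume "binval v = x \<and> (\<exists>\<^sub>\<infinity>i. v i)"
  then show "v = w" using binval_unique[of v x w] assms by simp
qed

lemma tilde_props:
  assumes "0 < x" "x \<le> 1"
  shows "binval (tilde x) = x"
proof -
  obtain w where w: "binval w = x" "\<exists>\<^sub>\<infinity>i. w i" using binval_exists[OF assms] by blast
  then show ?thesis using tilde_eq[OF w] by simp
qed




lemma sp_Suc: "startpos u (Suc j) = startpos u j + length (u j)"
  unfolding startpos_def by simp

lemma sp_mono: assumes "\<forall>j. u j \<noteq> []" shows "strict_mono (startpos u)"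
  by (rule strict_monoI_Suc) (use assms in \<open>simp add: sp_Suc\<close>)

lemma least_block:
  assumes "\<forall>j. u j \<noteq> []" "startpos u j \<le> n" "n < startpos u (Suc j)"
  shows "(LEAST j'. n < startpos u (Suc j')) = j"
proof (rule Least_equality)
  show "n < startpos u (Suc j)" by fact
  fix j' assume j': "n < startpos u (Suc j')"
  show "j \<le> j'"
  proof (rule ccontr)
    assume "\<not> j \<le> j'"
    then have "Suc j' \<le> j" by simp
    then have "startpos u (Suc j') \<le> startpos u j"
      using strict_mono_leD[OF sp_mono[OF assms(1)]] by blast
    then show False using j' assms(2) by simp
  qed
qed

lemma ci_nth:
  assumes "\<forall>j. u j \<noteq> []" "t < length (u j)"
  shows "concat_inf u (startpos u j + t) = u j ! t"
proof -
  have "(LEAST j'. startpos u j + t < startpos u (Suc j')) = j"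
    by (rule least_block) (use assms in \<open>auto simp: sp_Suc\<close>)
  then show ?thesis unfolding concat_inf_def Let_def by simp
qed

lemma sum_lessThan_add': fixes L :: nat shows "(\<Sum>i<a + L. f i) = (\<Sum>i<a. f i) + (\<Sum>t<L. f (a + t) :: real)"
  by (induction L) (simp_all add: add.assoc)

lemma psum_blocks:
  assumes "\<forall>j. u j \<noteq> []"
  shows "(\<Sum>i<startpos u J. dig (concat_inf u) i) = (\<Sum>j<J. finval (u j) / 2 ^ startpos u j)"
proof (induction J)
  case 0 then show ?case by (simp add: startpos_def)
next
  case (Suc J)
  have "(\<Sum>t<length (u J). dig (concat_inf u) (startpos u J + t))
      = (\<Sum>t<length (u J). (if u J ! t then 1 else 0) / 2 ^ Suc t / 2 ^ startpos u J)"
    by (rule sum.cong) (auto simp: dig_def ci_nth[OF assms] power_add)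
  also have "\<dots> = finval (u J) / 2 ^ startpos u J"
    unfolding finval_def by (simp add: sum_divide_distrib)
  finally show ?case using Suc by (simp add: sp_Suc sum_lessThan_add')
qed

lemma concat_sums:
  assumes "\<forall>j. u j \<noteq> []"
  shows "(\<lambda>j. finval (u j) / 2 ^ startpos u j) sums binval (concat_inf u)"
proof -
  have "(\<lambda>n. \<Sum>i<n. dig (concat_inf u) i) \<longlonglongrightarrow> binval (concat_inf u)"
    using summable_dig[of "concat_inf u"] unfolding binval_dig
    by (simp add: summable_LIMSEQ)
  from LIMSEQ_subseq_LIMSEQ[OF this sp_mono[OF assms]]
  show ?thesis unfolding sums_def o_def psum_blocks[OF assms] .
qed

lemma concat_val_binval:
  assumes "\<forall>j. u j \<noteq> []"
  shows "concat_val u = binval (concat_inf u)"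
  unfolding concat_val_def using concat_sums[OF assms] sums_unique by metis

lemma sp_interleave:
  "startpos (\<lambda>j. if even j then u (j div 2) else []) (2 * i) = startpos u i"
proof (induction i)
  case 0 then show ?case by (simp add: startpos_def)
next
  case (Suc i)
  have "startpos (\<lambda>j. if even j then u (j div 2) else []) (2 * Suc i)
      = startpos (\<lambda>j. if even j then u (j div 2) else []) (Suc (Suc (2 * i)))" by simp
  also have "\<dots> = startpos u i + length (u i)" using Suc by (simp add: sp_Suc)
  finally show ?case by (simp add: sp_Suc)
qed

lemma concat_val_interleave:
  assumes "\<forall>j. u j \<noteq> []"
  shows "concat_val (\<lambda>j. if even j then u (j div 2) else []) = concat_val u"
proof -
  define v where "v = (\<lambda>j. if even j then u (j div 2) else [])"
  define g where "g j = finval (v j) / 2 ^ startpos v j" for j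
  have "(\<lambda>i. g (2 * i)) = (\<lambda>j. finval (u j) / 2 ^ startpos u j)"
    by (auto simp: g_def v_def[symmetric] sp_interleave[of u, folded v_def]) (simp add: v_def)
  then have "(\<lambda>i. g (2 * i)) sums binval (concat_inf u)" using concat_sums[OF assms] by simp
  moreover have "strict_mono (\<lambda>i::nat. 2 * i)" by (rule strict_monoI) simp
  moreover have "g n = 0" if "n \<notin> range (\<lambda>i::nat. 2 * i)" for n
  proof -
    have "odd n" using that by (metis dvdE rangeI)
    then show ?thesis by (simp add: g_def v_def finval_def)
  qed
  ultimately have "g sums binval (concat_inf u)" using sums_mono_reindex by blast
  then have "suminf g = binval (concat_inf u)" by (rule sums_unique[symmetric])
  moreover have "concat_val v = suminf g" unfolding concat_val_def g_def ..
  ultimately show ?thesis unfolding v_def[symmetric] using concat_val_binval[OF assms] by simp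
qed




lemma sum_lessThan_add'': fixes L :: nat shows "(\<Sum>i<a + L. f i) = (\<Sum>i<a. f i) + (\<Sum>t<L. f (a + t) :: real)"
  by (induction L) (simp_all add: add.assoc)

fun Pset :: "nat \<Rightarrow> bool list \<Rightarrow> nat \<Rightarrow> bool list set" where
  "Pset k we 0 = {[]}"
| "Pset k we (Suc n) = (\<lambda>(b,p). b @ we @ p) ` ({b. length b = k} \<times> Pset k we n)"

lemma lists_k: "finite {b::bool list. length b = k} \<and> card {b::bool list. length b = k} = 2 ^ k"
proof -
  have e: "{b::bool list. length b = k} = {xs. set xs \<subseteq> UNIV \<and> length xs = k}" by simp
  show ?thesis unfolding e
    using finite_lists_length_eq[of "UNIV::bool set" k] card_lists_length_eq[of "UNIV::bool set" k]
    by simp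
qed

lemma Pset_card: "finite (Pset k we n) \<and> card (Pset k we n) \<le> 2 ^ (k * n)"
proof (induction n)
  case 0 then show ?case by simp
next
  case (Suc n)
  let ?A = "{b::bool list. length b = k} \<times> Pset k we n"
  have fA: "finite ?A" using Suc lists_k by simp
  have "card (Pset k we (Suc n)) \<le> card ?A" using card_image_le[OF fA] by simp
  also have "\<dots> = 2 ^ k * card (Pset k we n)" using lists_k by (simp add: card_cartesian_product)
  also have "\<dots> \<le> 2 ^ k * 2 ^ (k * n)" using Suc by simp
  also have "\<dots> = 2 ^ (k * Suc n)" by (simp add: power_add)
  finally show ?case using fA by simp
qed

lemma finval_append: "finval (a @ b) = finval a + finval b / 2 ^ length a"
proof -
  have "finval (a @ b) = (\<Sum>i<length a + length b. (if (a @ b) ! i then 1 else 0) / 2 ^ Suc i)"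
    unfolding finval_def by simp
  also have "\<dots> = finval a + (\<Sum>t<length b. (if b ! t then 1 else 0) / 2 ^ Suc t / 2 ^ length a)"
    unfolding sum_lessThan_add'' finval_def by (simp add: nth_append power_add mult_ac)
  also have "\<dots> = finval a + finval b / 2 ^ length a"
    unfolding finval_def by (simp add: sum_divide_distrib)
  finally show ?thesis .
qed

lemma finval_map: "finval (map w [0..<L]) = (\<Sum>i<L. dig w i)"
  unfolding finval_def dig_def by simp

lemma cover:
  assumes "length we = k"
  shows "(\<forall>i<n. block k w (2*i+1) = we) \<Longrightarrow>
    \<exists>p\<in>Pset k we n. finval p \<le> binval w \<and> binval w \<le> finval p + 1 / 2 ^ (2*n*k)"
proof (induction n arbitrary: w)
  case 0
  then show ?case using binval_nonneg[of w] binval_le1[of w] by (simp add: finval_def)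
next
  case (Suc n)
  define w' where "w' = (\<lambda>i. w (i + 2*k))"
  have "\<forall>i<n. block k w' (2*i+1) = we"
  proof (intro allI impI)
    fix i assume "i < n"
    then have "block k w (2*(Suc i)+1) = we" using Suc.prems by blast
    moreover have "block k w' (2*i+1) = block k w (2*(Suc i)+1)"
      unfolding block_def w'_def by (simp add: algebra_simps)
    ultimately show "block k w' (2*i+1) = we" by simp
  qed
  then obtain p' where p': "p' \<in> Pset k we n" "finval p' \<le> binval w'"
      "binval w' \<le> finval p' + 1 / 2 ^ (2*n*k)"
    using Suc.IH by blast
  have we: "we = map (\<lambda>i. w (k + i)) [0..<k]"
    using Suc.prems[rule_format, of 0] unfolding block_def by simp
  define p where "p = map w [0..<k] @ we @ p'"
  have pin: "p \<in> Pset k we (Suc n)" unfolding p_def using p' by force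
  have S: "(\<Sum>i<2*k. dig w i) = finval (map w [0..<k] @ we)"
  proof -
    have "(\<Sum>i<2*k. dig w i) = (\<Sum>i<k. dig w i) + (\<Sum>t<k. dig w (k + t))"
      using sum_lessThan_add''[of "dig w" k k] by (simp add: mult_2)
    also have "(\<Sum>t<k. dig w (k + t)) = finval we / 2 ^ k"
      unfolding we finval_map by (simp add: dig_def sum_divide_distrib power_add mult_ac)
    finally show ?thesis by (simp add: finval_append finval_map)
  qed
  have bw: "binval w = finval (map w [0..<k] @ we) + binval w' / 2 ^ (2*k)"
    using binval_split[of w "2*k"] S w'_def by simp
  have fp: "finval p = finval (map w [0..<k] @ we) + finval p' / 2 ^ (2*k)"
    unfolding p_def using finval_append[of "map w [0..<k] @ we" p'] assms by simp
  have e: "1 / 2 ^ (2 * Suc n * k) = (1 / 2 ^ (2*n*k)) / (2 ^ (2*k) :: real)"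
    by (simp add: power_add algebra_simps)
  have "finval p \<le> binval w" using bw fp p'(2) by (simp add: divide_right_mono)
  moreover have "binval w \<le> finval p + 1 / 2 ^ (2 * Suc n * k)"
  proof -
    have "binval w' / 2 ^ (2*k) \<le> (finval p' + 1 / 2 ^ (2*n*k)) / 2 ^ (2*k)"
      using p'(3) by (simp add: divide_right_mono)
    then show ?thesis using bw fp e by (simp add: add_divide_distrib)
  qed
  ultimately show ?case using pin by blast
qed

lemma null_W:
  assumes "length we = k" "k \<ge> 1"
  shows "\<exists>Z. Z \<in> null_sets lebesgue \<and> (\<forall>w. (\<forall>i. block k w (2*i+1) = we) \<longrightarrow> binval w \<in> Z)"
proof -
  define T where "T n = (\<Union>p\<in>Pset k we n. {finval p .. finval p + 1 / 2 ^ (2*n*k)})" for n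
  define Z where "Z = (\<Inter>n. T n)"
  have Tm: "T n \<in> sets lebesgue" for n
    unfolding T_def using Pset_card[of k we n] by (intro sets.finite_UN) auto
  have Ivm: "measure lebesgue {a..b} = b - a" if "a \<le> b" for a b :: real
    using that by (simp add: measure_completion content_real)
  have Tmeas: "measure lebesgue (T n) \<le> 1 / 2 ^ n" for n
  proof -
    have "measure lebesgue (T n) \<le> (\<Sum>p\<in>Pset k we n. measure lebesgue {finval p .. finval p + 1 / 2 ^ (2*n*k)})"
      unfolding T_def using Pset_card[of k we n] by (intro measure_UNION_le) auto
    also have "\<dots> = real (card (Pset k we n)) * (1 / 2 ^ (2*n*k))"
      using Ivm by simp
    also have "\<dots> \<le> 2 ^ (k * n) * (1 / 2 ^ (2*n*k))"
      using Pset_card[of k we n] by (intro mult_right_mono) (auto simp del: of_nat_power simp: of_nat_power[symmetric])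
    also have "\<dots> = 1 / 2 ^ (k * n)"
    proof -
      have e2: "2*n*k = k*n + k*n" by simp
      show ?thesis unfolding e2 power_add by simp
    qed
    also have "\<dots> \<le> 1 / 2 ^ n"
      using assms by (intro divide_left_mono power_increasing) auto
    finally show ?thesis .
  qed
  have Zm: "Z \<in> sets lebesgue" unfolding Z_def using Tm by auto
  have ZT: "Z \<subseteq> T n" for n unfolding Z_def by auto
  have T0: "T 0 = {0..1}" unfolding T_def by (simp add: finval_def)
  have Zf: "Z \<in> lmeasurable"
    by (rule bounded_set_imp_lmeasurable[OF _ Zm]) (rule bounded_subset[OF bounded_closed_interval[of 0 1]], use ZT[of 0] T0 in auto)
  have Tf: "T n \<in> lmeasurable" for n
    by (rule bounded_set_imp_lmeasurable[OF _ Tm]) (unfold T_def, rule bounded_UN, use Pset_card in auto)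
  have mZ: "measure lebesgue Z \<le> 1 / 2 ^ n" for n
    by (rule order_trans[OF measure_mono_fmeasurable[OF ZT Zm Tf] Tmeas])
  have "measure lebesgue Z = 0"
  proof (rule ccontr)
    assume "measure lebesgue Z \<noteq> 0"
    then have pos: "measure lebesgue Z > 0" using measure_nonneg by (metis less_eq_real_def)
    obtain n where "(1/2::real) ^ n < measure lebesgue Z" using real_arch_pow_inv[OF pos, of "1/2"] by auto
    then show False using mZ[of n] by (simp add: power_divide)
  qed
  then have "emeasure lebesgue Z = 0"
    using emeasure_eq_measure2[OF Zf] by simp
  then have "Z \<in> null_sets lebesgue"
    using Zm by (rule null_setsI)
  moreover have "binval w \<in> Z" if wW: "\<forall>i. block k w (2*i+1) = we" for w
  proof -
    have "binval w \<in> T n" for n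
    proof -
      have "\<forall>i<n. block k w (2*i+1) = we" using wW by simp
      then obtain p where "p \<in> Pset k we n" "finval p \<le> binval w" "binval w \<le> finval p + 1 / 2 ^ (2*n*k)"
        using cover[OF assms(1), of n w] by blast
      then show ?thesis unfolding T_def by auto
    qed
    then show ?thesis unfolding Z_def by blast
  qed
  ultimately show ?thesis by (intro exI[of _ Z]) blast
qed




definition Wd :: "nat \<Rightarrow> bool list \<Rightarrow> (nat \<Rightarrow> bool list) \<Rightarrow> nat \<Rightarrow> bool" where
  "Wd k we b n = (if even (n div k) then b (n div k div 2) ! (n mod k) else we ! (n mod k))"

lemma Wd_at:
  assumes "0 < k" "t < k"
  shows "Wd k we b (j * k + t) = (if even j then b (j div 2) ! t else we ! t)"
proof -
  have "(j * k + t) div k = j" "(j * k + t) mod k = t" using assms by auto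
  then show ?thesis unfolding Wd_def by simp
qed

lemma Wd_block:
  assumes "0 < k" "length we = k" "\<forall>i. length (b i) = k"
  shows "block k (Wd k we b) j = (if even j then b (j div 2) else we)"
  by (rule nth_equalityI) (use assms in \<open>auto simp: block_def Wd_at\<close>)

lemma all_false_eq:
  assumes "length x = k" "length y = k" "\<forall>t<k. \<not> x ! t" "\<forall>t<k. \<not> y ! t"
  shows "x = y"
  by (rule nth_equalityI) (use assms in auto)

lemma Wd_infm:
  assumes "0 < k" "length we = k" "\<forall>i. length (b i) = k" "\<forall>i. b i \<noteq> we"
  shows "\<exists>\<^sub>\<infinity>n. Wd k we b n"
  unfolding INFM_nat
proof
  fix m
  have "\<not> ((\<forall>t<k. \<not> b (Suc m) ! t) \<and> (\<forall>t<k. \<not> we ! t))"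
    using all_false_eq[of "b (Suc m)" k we] assms by auto
  then consider t where "t < k" "b (Suc m) ! t" | t where "t < k" "we ! t" by blast
  then show "\<exists>n>m. Wd k we b n"
  proof cases
    case 1
    have "Wd k we b ((2 * Suc m) * k + t)" using Wd_at[OF assms(1) 1(1), of we b "2 * Suc m"] 1 by simp
    moreover have "(2 * Suc m) * k + t > m"
    proof -
      have "2 * Suc m * 1 \<le> (2 * Suc m) * k" using assms(1) by (intro mult_le_mono2) simp
      then have "Suc m \<le> (2 * Suc m) * k" by simp
      then show ?thesis by linarith
    qed
    ultimately show ?thesis by blast
  next
    case 2
    have "Wd k we b ((2 * Suc m + 1) * k + t)" using Wd_at[OF assms(1) 2(1), of we b "2 * Suc m + 1"] 2 by simp
    moreover have "(2 * Suc m + 1) * k + t > m"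
    proof -
      have "(2 * Suc m + 1) * 1 \<le> (2 * Suc m + 1) * k" using assms(1) by (intro mult_le_mono2) simp
      then have "Suc m \<le> (2 * Suc m + 1) * k" by (rule le_trans[rotated]) simp
      then show ?thesis by linarith
    qed
    ultimately show ?thesis by blast
  qed
qed

theorem mainTheorem7:
  fixes k :: nat and \<sigma> :: "bool list \<Rightarrow> bool list" and we :: "bool list"
  assumes "k \<ge> 2"
    and "erasing_block_subst k \<sigma> we"
    and "we \<noteq> replicate k True"
    and "optimal k \<sigma>"
  shows "\<exists>\<Gamma>. \<Gamma> \<subseteq> {0..1} \<and> \<Gamma> \<in> sets lebesgue \<and> emeasure lebesgue \<Gamma> = 0 \<and>
           f_sigma k \<sigma> we ` \<Gamma> \<notin> sets lebesgue"
proof -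
  have k0: "0 < k" "k \<ge> 1" using assms(1) by auto
  have lwe: "length we = k" and swe: "\<sigma> we = []" and uniq: "\<And>b. length b = k \<Longrightarrow> \<sigma> b = [] \<Longrightarrow> b = we"
    using assms(2) unfolding erasing_block_subst_def by auto
  obtain A where A: "A \<subseteq> {0<..<1::real}" "A \<notin> sets lebesgue" using vitali by blast
  obtain Z where Z: "Z \<in> null_sets lebesgue" "\<And>w. (\<forall>i. block k w (2*i+1) = we) \<Longrightarrow> binval w \<in> Z"
    using null_W[OF lwe k0(2)] by blast
  define bs where "bs y = (SOME b. (\<forall>i. length (b i) = k \<and> \<sigma> (b i) \<noteq> []) \<and> tilde y = concat_inf (\<lambda>i. \<sigma> (b i)))" for y
  have bs: "(\<forall>i. length (bs y i) = k \<and> \<sigma> (bs y i) \<noteq> []) \<and> tilde y = concat_inf (\<lambda>i. \<sigma> (bs y i))" for y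
  proof -
    have ex: "\<exists>b. (\<forall>i. length (b i) = k \<and> \<sigma> (b i) \<noteq> []) \<and> tilde y = concat_inf (\<lambda>i. \<sigma> (b i))"
      using assms(4) unfolding optimal_def by blast
    show ?thesis unfolding bs_def by (rule someI_ex[OF ex])
  qed
  define g where "g y = binval (Wd k we (bs y))" for y
  have key: "f_sigma k \<sigma> we (g y) = y \<and> g y \<in> Z \<and> g y \<in> {0..1}" if y: "y \<in> A" for y
  proof -
    define b where "b = bs y"
    have bl: "\<forall>i. length (b i) = k" and bn: "\<forall>i. \<sigma> (b i) \<noteq> []" using bs[of y] b_def by auto
    have bwe: "\<forall>i. b i \<noteq> we" using bn swe by metis
    define W where "W = Wd k we b"
    have blk: "block k W j = (if even j then b (j div 2) else we)" for j
      unfolding W_def by (rule Wd_block[OF k0(1) lwe bl])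
    have inf: "\<exists>\<^sub>\<infinity>n. W n" unfolding W_def by (rule Wd_infm[OF k0(1) lwe bl bwe])
    then obtain n where "W n" using INFM_nat by blast
    then have pos: "0 < binval W" by (rule binval_pos)
    have le1: "binval W \<le> 1" by (rule binval_le1)
    have til: "tilde (binval W) = W" by (rule tilde_eq[OF refl inf])
    have per: "block k (periodic_word we) 0 = we"
      by (rule nth_equalityI) (use lwe in \<open>auto simp: block_def periodic_word_def\<close>)
    have "W \<noteq> periodic_word we"
    proof
      assume "W = periodic_word we"
      then have "block k W 0 = we" using per by simp
      then show False using blk[of 0] bwe by simp
    qed
    have blks: "(\<lambda>j. \<sigma> (block k W j)) = (\<lambda>j. if even j then (\<lambda>i. \<sigma> (b i)) (j div 2) else [])"
      using blk swe by auto
    have "f_sigma k \<sigma> we (binval W) = concat_val (\<lambda>j. \<sigma> (block k W j))"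
      unfolding f_sigma_def using pos le1 til \<open>W \<noteq> periodic_word we\<close> by simp
    also have "\<dots> = concat_val (\<lambda>i. \<sigma> (b i))"
      unfolding blks by (rule concat_val_interleave) (use bn in simp)
    also have "\<dots> = binval (concat_inf (\<lambda>i. \<sigma> (b i)))"
      by (rule concat_val_binval) (use bn in simp)
    also have "\<dots> = binval (tilde y)" using bs[of y] b_def by simp
    also have "\<dots> = y" using y A(1) by (intro tilde_props) auto
    finally have "f_sigma k \<sigma> we (binval W) = y" .
    moreover have "binval W \<in> Z" using Z(2)[of W] blk by simp
    ultimately show ?thesis using pos le1 unfolding g_def W_def b_def by auto
  qed
  define \<Gamma> where "\<Gamma> = g ` A"
  have G0: "\<Gamma> \<in> null_sets lebesgue"
    by (rule null_sets_completion_subset[OF _ Z(1)]) (use key in \<open>auto simp: \<Gamma>_def\<close>)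
  have "f_sigma k \<sigma> we ` \<Gamma> = A"
    unfolding \<Gamma>_def image_image using key by (auto simp: image_iff)
  moreover have "\<Gamma> \<subseteq> {0..1}" using key unfolding \<Gamma>_def by auto
  ultimately show ?thesis using G0 A(2) by (intro exI[of _ \<Gamma>]) auto
qed


end
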